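(* Let $G$ be a LEF-group and let $\mathcal{C}$ be a concrete category with a terminal object and fibered products. Let $(A,a)$ be a pointed object of $\mathcal{C}$ such that $A$ is finite product Hopfian or finite product co-Hopfian. If $\tau,\sigma\in CA_{\mathcal{C}}(G,(A,a))$ satisfy $\sigma\circ\tau=\mathrm{Id}$, then $\tau\circ\sigma=\mathrm{Id}$.
   Context: A group $G$ is LEF if every finite subset $S\subset G$ admits an injective map $\varphi\colon S\to H$ into some finite group $H$ with $\varphi(ab)=\varphi(a)\varphi(b)$ whenever $a,b,ab\in S$. A concrete category is a category with a faithful functor to sets; objects and morphisms are identified with their underlying sets and maps. In a category, an object $A$ is Hopfian if every epimorphism $A\to A$ is an automorphism, co-Hopfian if every monomorphism $A\to A$ is an automorphism; $A$ is finite product Hopfian (resp. co-Hopfian) if $A^n$ is Hopfian (resp. co-Hopfian) for all $n\in\mathbb{N}$. For finite $E$, $A^E$ is the product over the terminal object $\varepsilon$ of copies of $A$ indexed by $E$. A pointed object is $(A,a)$ with $a\colon\varepsilon\to A$; a pointed morphism $(A,a)\to(B,b)$ is $f\colon A\to B$ with $f\circ a=b$; $A^E$ is pointed by $a^E$ with all components $a$. $G$ acts on $A^G$ by $(gc)(h)=c(g^{-1}h)$; a cellular automaton is a map $\tau\colon A^G\to A^G$ with $(\tau(c))(g)=\mu((g^{-1}c)|_M)$ for some finite $M\subset G$ and map $\mu\colon A^M\to A$. $CA_{\mathcal{C}}(G,(A,a))$ is the set of cellular automata admitting, for some finite memory set $M$, a local defining map that is the underlying map of a pointed morphism $(A^M,a^M)\to(A,a)$.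 *)

theory Defs
  imports "HOL-Algebra.Group"
begin

text \<open>A category with objects of type 'o and morphisms of type 'm, together with a
  faithful functor to sets: every object X has an underlying set USet X (of elements
  of type 'e) and every morphism f an underlying map UMap f.\<close>

record ('o, 'm, 'e) concrete_cat =
  Obj  :: "'o set"
  Mor  :: "'m set"
  Dom  :: "'m \<Rightarrow> 'o"
  Cod  :: "'m \<Rightarrow> 'o"
  Cmp  :: "'m \<Rightarrow> 'm \<Rightarrow> 'm"   (* Cmp g f = g o f *)
  Idm  :: "'o \<Rightarrow> 'm"
  USet :: "'o \<Rightarrow> 'e set"
  UMap :: "'m \<Rightarrow> 'e \<Rightarrow> 'e"

definition hom :: "('o, 'm, 'e) concrete_cat \<Rightarrow> 'o \<Rightarrow> 'o \<Rightarrow> 'm set" where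
  "hom C X Y = {f \<in> Mor C. Dom C f = X \<and> Cod C f = Y}"

definition concrete_category :: "('o, 'm, 'e) concrete_cat \<Rightarrow> bool" where
  "concrete_category C \<longleftrightarrow>
     (\<forall>f\<in>Mor C. Dom C f \<in> Obj C \<and> Cod C f \<in> Obj C)
   \<and> (\<forall>X\<in>Obj C. Idm C X \<in> hom C X X)
   \<and> (\<forall>f\<in>Mor C. \<forall>g\<in>Mor C. Cod C f = Dom C g \<longrightarrow> Cmp C g f \<in> hom C (Dom C f) (Cod C g))
   \<and> (\<forall>f\<in>Mor C. \<forall>g\<in>Mor C. \<forall>h\<in>Mor C. Cod C f = Dom C g \<and> Cod C g = Dom C h \<longrightarrow>
        Cmp C h (Cmp C g f) = Cmp C (Cmp C h g) f)
   \<and> (\<forall>f\<in>Mor C. Cmp C (Idm C (Cod C f)) f = f \<and> Cmp C f (Idm C (Dom C f)) = f)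
   \<and> (\<forall>f\<in>Mor C. \<forall>x\<in>USet C (Dom C f). UMap C f x \<in> USet C (Cod C f))
   \<and> (\<forall>f\<in>Mor C. \<forall>g\<in>Mor C. Cod C f = Dom C g \<longrightarrow>
        (\<forall>x\<in>USet C (Dom C f). UMap C (Cmp C g f) x = UMap C g (UMap C f x)))
   \<and> (\<forall>X\<in>Obj C. \<forall>x\<in>USet C X. UMap C (Idm C X) x = x)
   \<and> (\<forall>X Y f g. f \<in> hom C X Y \<and> g \<in> hom C X Y \<and> (\<forall>x\<in>USet C X. UMap C f x = UMap C g x)
        \<longrightarrow> f = g)"

definition is_terminal :: "('o, 'm, 'e) concrete_cat \<Rightarrow> 'o \<Rightarrow> bool" where
  "is_terminal C T \<longleftrightarrow> T \<in> Obj C \<and> (\<forall>X\<in>Obj C. \<exists>!f. f \<in> hom C X T)"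

text \<open>Convention for concrete categories (Ceccherini-Silberstein--Coornaert): having a
  terminal object / fibered products includes that the forgetful functor preserves them,
  i.e. the underlying set of a terminal object is a singleton and the underlying set of a
  fibered product is the set-theoretic fibered product.\<close>

definition has_terminal_object :: "('o, 'm, 'e) concrete_cat \<Rightarrow> bool" where
  "has_terminal_object C \<longleftrightarrow> (\<exists>T. is_terminal C T)
     \<and> (\<forall>T. is_terminal C T \<longrightarrow> (\<exists>t. USet C T = {t}))"

definition is_pullback ::
  "('o, 'm, 'e) concrete_cat \<Rightarrow> 'm \<Rightarrow> 'm \<Rightarrow> 'o \<Rightarrow> 'm \<Rightarrow> 'm \<Rightarrow> bool" where
  "is_pullback C f g P p q \<longleftrightarrow>
     f \<in> Mor C \<and> g \<in> Mor C \<and> Cod C f = Cod C g \<and> P \<in> Obj C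
   \<and> p \<in> hom C P (Dom C f) \<and> q \<in> hom C P (Dom C g) \<and> Cmp C f p = Cmp C g q
   \<and> (\<forall>W\<in>Obj C. \<forall>u v. u \<in> hom C W (Dom C f) \<and> v \<in> hom C W (Dom C g) \<and> Cmp C f u = Cmp C g v
        \<longrightarrow> (\<exists>!h. h \<in> hom C W P \<and> Cmp C p h = u \<and> Cmp C q h = v))"

definition has_fibered_products :: "('o, 'm, 'e) concrete_cat \<Rightarrow> bool" where
  "has_fibered_products C \<longleftrightarrow>
     (\<forall>f\<in>Mor C. \<forall>g\<in>Mor C. Cod C f = Cod C g \<longrightarrow> (\<exists>P p q. is_pullback C f g P p q))
   \<and> (\<forall>f g P p q. is_pullback C f g P p q \<longrightarrow>
        bij_betw (\<lambda>x. (UMap C p x, UMap C q x)) (USet C P)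
          {(x, y). x \<in> USet C (Dom C f) \<and> y \<in> USet C (Dom C g) \<and> UMap C f x = UMap C g y})"

definition is_power ::
  "('o, 'm, 'e) concrete_cat \<Rightarrow> 'o \<Rightarrow> 'i set \<Rightarrow> 'o \<Rightarrow> ('i \<Rightarrow> 'm) \<Rightarrow> bool" where
  "is_power C A E P \<pi> \<longleftrightarrow> A \<in> Obj C \<and> P \<in> Obj C \<and> (\<forall>e\<in>E. \<pi> e \<in> hom C P A)
   \<and> (\<forall>X\<in>Obj C. \<forall>h. (\<forall>e\<in>E. h e \<in> hom C X A) \<longrightarrow>
        (\<exists>!u. u \<in> hom C X P \<and> (\<forall>e\<in>E. Cmp C (\<pi> e) u = h e)))"

definition epi :: "('o, 'm, 'e) concrete_cat \<Rightarrow> 'm \<Rightarrow> bool" where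
  "epi C f \<longleftrightarrow> f \<in> Mor C \<and> (\<forall>Z\<in>Obj C. \<forall>g h. g \<in> hom C (Cod C f) Z \<and> h \<in> hom C (Cod C f) Z
      \<and> Cmp C g f = Cmp C h f \<longrightarrow> g = h)"

definition mono :: "('o, 'm, 'e) concrete_cat \<Rightarrow> 'm \<Rightarrow> bool" where
  "mono C f \<longleftrightarrow> f \<in> Mor C \<and> (\<forall>Z\<in>Obj C. \<forall>g h. g \<in> hom C Z (Dom C f) \<and> h \<in> hom C Z (Dom C f)
      \<and> Cmp C f g = Cmp C f h \<longrightarrow> g = h)"

definition iso :: "('o, 'm, 'e) concrete_cat \<Rightarrow> 'm \<Rightarrow> bool" where
  "iso C f \<longleftrightarrow> f \<in> Mor C \<and> (\<exists>g \<in> hom C (Cod C f) (Dom C f).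
      Cmp C g f = Idm C (Dom C f) \<and> Cmp C f g = Idm C (Cod C f))"

definition hopfian :: "('o, 'm, 'e) concrete_cat \<Rightarrow> 'o \<Rightarrow> bool" where
  "hopfian C X \<longleftrightarrow> (\<forall>f \<in> hom C X X. epi C f \<longrightarrow> iso C f)"

definition cohopfian :: "('o, 'm, 'e) concrete_cat \<Rightarrow> 'o \<Rightarrow> bool" where
  "cohopfian C X \<longleftrightarrow> (\<forall>f \<in> hom C X X. mono C f \<longrightarrow> iso C f)"

definition fin_prod_hopfian :: "('o, 'm, 'e) concrete_cat \<Rightarrow> 'o \<Rightarrow> bool" where
  "fin_prod_hopfian C A \<longleftrightarrow>
     (\<forall>(n::nat) P (\<pi>::nat \<Rightarrow> 'm). is_power C A {..<n} P \<pi> \<longrightarrow> hopfian C P)"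

definition fin_prod_cohopfian :: "('o, 'm, 'e) concrete_cat \<Rightarrow> 'o \<Rightarrow> bool" where
  "fin_prod_cohopfian C A \<longleftrightarrow>
     (\<forall>(n::nat) P (\<pi>::nat \<Rightarrow> 'm). is_power C A {..<n} P \<pi> \<longrightarrow> cohopfian C P)"

text \<open>The group G is a type of class group_add (written additively, not necessarily
  commutative). Finite target groups are HOL-Algebra groups with carrier in nat
  (every finite group has an isomorphic copy of this form).\<close>

definition LEF :: "'g::group_add itself \<Rightarrow> bool" where
  "LEF _ \<longleftrightarrow> (\<forall>S::'g set. finite S \<longrightarrow>
     (\<exists>(H::nat monoid) \<phi>. group H \<and> finite (carrier H) \<and> \<phi> \<in> S \<rightarrow> carrier H \<and> inj_on \<phi> S
        \<and> (\<forall>a\<in>S. \<forall>b\<in>S. a + b \<in> S \<longrightarrow> \<phi> (a + b) = \<phi> a \<otimes>\<^bsub>H\<^esub> \<phi> b)))"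

definition configs :: "('o, 'm, 'e) concrete_cat \<Rightarrow> 'o \<Rightarrow> ('g \<Rightarrow> 'e) set" where
  "configs C A = {c. \<forall>g. c g \<in> USet C A}"

text \<open>CA_C(G,(A,a)): cellular automata (tau c)(g) = mu((g^-1 c)|_M), where
  (g^-1 c)(m) = c(g m) and mu is the underlying map of a pointed morphism
  (A^M, a^M) -> (A, a). An element of the underlying set of A^M is identified with
  the function M -> A given by its projections.\<close>

definition CA :: "('o, 'm, 'e) concrete_cat \<Rightarrow> 'o \<Rightarrow> 'm
    \<Rightarrow> (('g::group_add \<Rightarrow> 'e) \<Rightarrow> ('g \<Rightarrow> 'e)) set" where
  "CA C A a = {\<tau>. \<exists>(M::'g set) P \<pi> f. finite M \<and> is_power C A M P \<pi> \<and> f \<in> hom C P A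
      \<and> (\<forall>aM. aM \<in> hom C (Dom C a) P \<and> (\<forall>m\<in>M. Cmp C (\<pi> m) aM = a) \<longrightarrow> Cmp C f aM = a)
      \<and> (\<forall>c \<in> configs C A. \<forall>g. \<tau> c g =
           UMap C f (THE x. x \<in> USet C P \<and> (\<forall>m\<in>M. UMap C (\<pi> m) x = c (g + m))))}"

end

theory Submission
  imports Defs
begin


definition points :: "('o, 'm, 'e) concrete_cat \<Rightarrow> 'o \<Rightarrow> 'i set \<Rightarrow> 'o \<Rightarrow> ('i \<Rightarrow> 'm) \<Rightarrow> bool" where
  "points C A E P \<pi> \<longleftrightarrow> (\<forall>\<psi>. (\<forall>i\<in>E. \<psi> i \<in> USet C A) \<longrightarrow>
      (\<exists>!x. x \<in> USet C P \<and> (\<forall>i\<in>E. UMap C (\<pi> i) x = \<psi> i)))"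


lemma points_ex: "points C A E P \<pi> \<Longrightarrow> (\<And>i. i \<in> E \<Longrightarrow> \<psi> i \<in> USet C A) \<Longrightarrow>
   \<exists>x. x \<in> USet C P \<and> (\<forall>i\<in>E. UMap C (\<pi> i) x = \<psi> i)"
  unfolding points_def by blast

lemma points_uniq: "points C A E P \<pi> \<Longrightarrow> (\<And>i. i \<in> E \<Longrightarrow> \<psi> i \<in> USet C A) \<Longrightarrow>
   x \<in> USet C P \<Longrightarrow> (\<forall>i\<in>E. UMap C (\<pi> i) x = \<psi> i) \<Longrightarrow>
   y \<in> USet C P \<Longrightarrow> (\<forall>i\<in>E. UMap C (\<pi> i) y = \<psi> i) \<Longrightarrow> x = y"
  unfolding points_def by blast

locale ccat =
  fixes C :: "('o, 'm, 'e) concrete_cat"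
  assumes cc: "concrete_category C"
begin

lemma cc_part1: "\<forall>f\<in>Mor C. Dom C f \<in> Obj C \<and> Cod C f \<in> Obj C"
  using cc unfolding concrete_category_def by (elim conjE) assumption

lemma cc_part2: "\<forall>X\<in>Obj C. Idm C X \<in> hom C X X"
  using cc unfolding concrete_category_def by (elim conjE) assumption

lemma cc_part3: "\<forall>f\<in>Mor C. \<forall>g\<in>Mor C. Cod C f = Dom C g \<longrightarrow> Cmp C g f \<in> hom C (Dom C f) (Cod C g)"
  using cc unfolding concrete_category_def by (elim conjE) assumption

lemma cc_part4: "\<forall>f\<in>Mor C. \<forall>g\<in>Mor C. \<forall>h\<in>Mor C. Cod C f = Dom C g \<and> Cod C g = Dom C h \<longrightarrow>
        Cmp C h (Cmp C g f) = Cmp C (Cmp C h g) f"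
  using cc unfolding concrete_category_def by (elim conjE) assumption

lemma cc_part5: "\<forall>f\<in>Mor C. Cmp C (Idm C (Cod C f)) f = f \<and> Cmp C f (Idm C (Dom C f)) = f"
  using cc unfolding concrete_category_def by (elim conjE) assumption

lemma cc_part6: "\<forall>f\<in>Mor C. \<forall>x\<in>USet C (Dom C f). UMap C f x \<in> USet C (Cod C f)"
  using cc unfolding concrete_category_def by (elim conjE) assumption

lemma cc_part7: "\<forall>f\<in>Mor C. \<forall>g\<in>Mor C. Cod C f = Dom C g \<longrightarrow>
        (\<forall>x\<in>USet C (Dom C f). UMap C (Cmp C g f) x = UMap C g (UMap C f x))"
  using cc unfolding concrete_category_def by (elim conjE) assumption

lemma cc_part8: "\<forall>X\<in>Obj C. \<forall>x\<in>USet C X. UMap C (Idm C X) x = x"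
  using cc unfolding concrete_category_def by (elim conjE) assumption

lemma cc_part9: "\<forall>X Y f g. f \<in> hom C X Y \<and> g \<in> hom C X Y \<and> (\<forall>x\<in>USet C X. UMap C f x = UMap C g x)
        \<longrightarrow> f = g"
  using cc unfolding concrete_category_def by (elim conjE) assumption



lemma homD: "f \<in> hom C X Y \<Longrightarrow> f \<in> Mor C \<and> Dom C f = X \<and> Cod C f = Y"
  by (simp add: hom_def)

lemma hom_obj: "f \<in> hom C X Y \<Longrightarrow> X \<in> Obj C \<and> Y \<in> Obj C"
  using cc_part1 unfolding hom_def by auto

lemma comp_hom: "f \<in> hom C X Y \<Longrightarrow> g \<in> hom C Y Z \<Longrightarrow> Cmp C g f \<in> hom C X Z"
  using cc_part3 unfolding hom_def by auto

lemma assoc: "f \<in> hom C X Y \<Longrightarrow> g \<in> hom C Y Z \<Longrightarrow> h \<in> hom C Z W \<Longrightarrow>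
   Cmp C h (Cmp C g f) = Cmp C (Cmp C h g) f"
  using cc_part4 unfolding hom_def by auto

lemma idl: "f \<in> hom C X Y \<Longrightarrow> Cmp C (Idm C Y) f = f"
  using cc_part5 unfolding hom_def by auto

lemma idr: "f \<in> hom C X Y \<Longrightarrow> Cmp C f (Idm C X) = f"
  using cc_part5 unfolding hom_def by auto

lemma id_hom: "X \<in> Obj C \<Longrightarrow> Idm C X \<in> hom C X X"
  using cc_part2 by auto

lemma umap_in: "f \<in> hom C X Y \<Longrightarrow> x \<in> USet C X \<Longrightarrow> UMap C f x \<in> USet C Y"
  using cc_part6 unfolding hom_def by auto

lemma umap_comp: "f \<in> hom C X Y \<Longrightarrow> g \<in> hom C Y Z \<Longrightarrow> x \<in> USet C X \<Longrightarrow>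
   UMap C (Cmp C g f) x = UMap C g (UMap C f x)"
  using cc_part7 unfolding hom_def by auto

lemma umap_id: "X \<in> Obj C \<Longrightarrow> x \<in> USet C X \<Longrightarrow> UMap C (Idm C X) x = x"
  using cc_part8 by auto

lemma faithful: "f \<in> hom C X Y \<Longrightarrow> g \<in> hom C X Y \<Longrightarrow> (\<And>x. x \<in> USet C X \<Longrightarrow> UMap C f x = UMap C g x) \<Longrightarrow> f = g"
  using cc_part9 by blast

lemma power_comp: "is_power C A E P \<pi> \<Longrightarrow> i \<in> E \<Longrightarrow> \<pi> i \<in> hom C P A"
  unfolding is_power_def by (elim conjE) (erule bspec)

lemma power_obj: "is_power C A E P \<pi> \<Longrightarrow> A \<in> Obj C \<and> P \<in> Obj C"
  unfolding is_power_def by (elim conjE) (intro conjI)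

lemma power_univ: "is_power C A E P \<pi> \<Longrightarrow> X \<in> Obj C \<Longrightarrow> (\<And>e. e \<in> E \<Longrightarrow> h e \<in> hom C X A) \<Longrightarrow>
   \<exists>!u. u \<in> hom C X P \<and> (\<forall>e\<in>E. Cmp C (\<pi> e) u = h e)"
  unfolding is_power_def by (elim conjE) (drule bspec, assumption, drule spec, erule mp, blast)

lemma power_ex: assumes "is_power C A E P \<pi>" "X \<in> Obj C" "\<And>e. e \<in> E \<Longrightarrow> h e \<in> hom C X A"
  shows "\<exists>u. u \<in> hom C X P \<and> (\<forall>e\<in>E. Cmp C (\<pi> e) u = h e)"
proof -
  have "\<exists>!u. u \<in> hom C X P \<and> (\<forall>e\<in>E. Cmp C (\<pi> e) u = h e)"
    using power_univ[OF assms] .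
  then show ?thesis by (rule ex1_implies_ex)
qed

lemma power_uniq: assumes "is_power C A E P \<pi>" "X \<in> Obj C" "\<And>e. e \<in> E \<Longrightarrow> h e \<in> hom C X A"
  and "u \<in> hom C X P" "\<forall>e\<in>E. Cmp C (\<pi> e) u = h e"
  and "v \<in> hom C X P" "\<forall>e\<in>E. Cmp C (\<pi> e) v = h e"
  shows "u = v"
proof -
  have "\<exists>!u. u \<in> hom C X P \<and> (\<forall>e\<in>E. Cmp C (\<pi> e) u = h e)"
    using power_univ[OF assms(1,2,3)] .
  then show ?thesis using assms(4-7) by blast
qed

lemma power_points_transfer:
  assumes pw: "is_power C A E P \<pi>" and pt: "points C A E P \<pi>" and pw2: "is_power C A E P2 \<pi>2"
  shows "points C A E P2 \<pi>2"
proof -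
  have PO: "P \<in> Obj C" "P2 \<in> Obj C" using power_obj[OF pw, THEN conjunct2] power_obj[OF pw2, THEN conjunct2] .
  have \<pi>h: "\<And>i. i \<in> E \<Longrightarrow> \<pi> i \<in> hom C P A" by (rule power_comp[OF pw])
  have \<pi>2h: "\<And>i. i \<in> E \<Longrightarrow> \<pi>2 i \<in> hom C P2 A" by (rule power_comp[OF pw2])
  obtain u where u: "u \<in> hom C P2 P" "\<forall>i\<in>E. Cmp C (\<pi> i) u = \<pi>2 i"
    using power_ex[where h=\<pi>2, OF pw PO(2) \<pi>2h] by blast
  obtain v where v: "v \<in> hom C P P2" "\<forall>i\<in>E. Cmp C (\<pi>2 i) v = \<pi> i"
    using power_ex[where h=\<pi>, OF pw2 PO(1) \<pi>h] by blast
  have vu: "Cmp C v u = Idm C P2"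
  proof (rule power_uniq[where h=\<pi>2, OF pw2 PO(2) \<pi>2h])
    show "Cmp C v u \<in> hom C P2 P2" using comp_hom[OF u(1) v(1)] .
    show "\<forall>i\<in>E. Cmp C (\<pi>2 i) (Cmp C v u) = \<pi>2 i"
    proof
      fix i assume i: "i \<in> E"
      have "Cmp C (\<pi>2 i) (Cmp C v u) = Cmp C (Cmp C (\<pi>2 i) v) u"
        using assoc[OF u(1) v(1) \<pi>2h[OF i]] .
      then show "Cmp C (\<pi>2 i) (Cmp C v u) = \<pi>2 i" using u v i by simp
    qed
    show "Idm C P2 \<in> hom C P2 P2" using id_hom PO by blast
    show "\<forall>i\<in>E. Cmp C (\<pi>2 i) (Idm C P2) = \<pi>2 i" using \<pi>2h idr by blast
  qed
  show ?thesis unfolding points_def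
  proof (intro allI impI)
    fix \<psi> assume \<psi>: "\<forall>i\<in>E. \<psi> i \<in> USet C A"
    have \<psi>E: "\<And>i. i \<in> E \<Longrightarrow> \<psi> i \<in> USet C A" using \<psi> by blast
    obtain x where x: "x \<in> USet C P" "\<forall>i\<in>E. UMap C (\<pi> i) x = \<psi> i"
      using points_ex[where \<psi>=\<psi>, OF pt \<psi>E] by blast
    have xu: "\<And>y. y \<in> USet C P \<Longrightarrow> (\<forall>i\<in>E. UMap C (\<pi> i) y = \<psi> i) \<Longrightarrow> y = x"
      using points_uniq[where \<psi>=\<psi>, OF pt \<psi>E _ _ x(1) x(2)] by blast
    show "\<exists>!x. x \<in> USet C P2 \<and> (\<forall>i\<in>E. UMap C (\<pi>2 i) x = \<psi> i)"
    proof (rule ex1I[of _ "UMap C v x"], intro conjI ballI)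
      show "UMap C v x \<in> USet C P2" using umap_in[OF v(1) x(1)] .
      fix i assume i: "i \<in> E"
      show "UMap C (\<pi>2 i) (UMap C v x) = \<psi> i"
        using umap_comp[OF v(1) \<pi>2h[OF i] x(1)] v(2) i x(2) by simp
    next
      fix y assume y: "y \<in> USet C P2 \<and> (\<forall>i\<in>E. UMap C (\<pi>2 i) y = \<psi> i)"
      have "UMap C u y \<in> USet C P" using umap_in[OF u(1)] y by blast
      moreover have "\<forall>i\<in>E. UMap C (\<pi> i) (UMap C u y) = \<psi> i"
      proof
        fix i assume i: "i \<in> E"
        have "UMap C (Cmp C (\<pi> i) u) y = UMap C (\<pi> i) (UMap C u y)"
          using umap_comp[OF u(1) \<pi>h[OF i]] y by blast
        then show "UMap C (\<pi> i) (UMap C u y) = \<psi> i" using u(2) y i by simp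
      qed
      ultimately have "UMap C u y = x" using xu by blast
      hence "UMap C v (UMap C u y) = UMap C v x" by simp
      moreover have "UMap C v (UMap C u y) = y"
      proof -
        have "UMap C v (UMap C u y) = UMap C (Cmp C v u) y"
          using umap_comp[OF u(1) v(1)] y by simp
        also have "\<dots> = y" using vu umap_id PO y by simp
        finally show ?thesis .
      qed
      ultimately show "y = UMap C v x" by simp
    qed
  qed
qed

end

locale ccat_term = ccat +
  fixes eps :: 'o and t :: 'e
  assumes trm: "is_terminal C eps" and uset_eps: "USet C eps = {t}"
    and fib: "has_fibered_products C"
begin

lemma tm: "\<forall>X\<in>Obj C. \<exists>!f. f \<in> hom C X eps"
  using trm unfolding is_terminal_def by (rule conjunct2)

lemma eps_obj: "eps \<in> Obj C"
  using trm unfolding is_terminal_def by (rule conjunct1)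

lemma term_ex: "X \<in> Obj C \<Longrightarrow> \<exists>f. f \<in> hom C X eps"
  using tm by blast

lemma term_uniq: "f \<in> hom C X eps \<Longrightarrow> g \<in> hom C X eps \<Longrightarrow> f = g"
proof -
  assume f: "f \<in> hom C X eps" and g: "g \<in> hom C X eps"
  have "X \<in> Obj C" using hom_obj[OF f] by (rule conjunct1)
  then have "\<exists>!f. f \<in> hom C X eps" using tm by blast
  then show "f = g" using f g by blast
qed

lemma fib1: "\<forall>f\<in>Mor C. \<forall>g\<in>Mor C. Cod C f = Cod C g \<longrightarrow> (\<exists>P p q. is_pullback C f g P p q)"
  using fib unfolding has_fibered_products_def by (rule conjunct1)

lemma fib2: "\<forall>f g P p q. is_pullback C f g P p q \<longrightarrow>
        bij_betw (\<lambda>x. (UMap C p x, UMap C q x)) (USet C P)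
          {(x, y). x \<in> USet C (Dom C f) \<and> y \<in> USet C (Dom C g) \<and> UMap C f x = UMap C g y}"
  using fib unfolding has_fibered_products_def by (rule conjunct2)

lemma pullbackD1: "is_pullback C f g P p q \<Longrightarrow> P \<in> Obj C \<and> p \<in> hom C P (Dom C f) \<and> q \<in> hom C P (Dom C g)"
  unfolding is_pullback_def by (elim conjE) (intro conjI; assumption)

lemma pullbackD2: "is_pullback C f g P p q \<Longrightarrow> W \<in> Obj C \<Longrightarrow> u \<in> hom C W (Dom C f) \<Longrightarrow> v \<in> hom C W (Dom C g) \<Longrightarrow> Cmp C f u = Cmp C g v
        \<Longrightarrow> \<exists>!h. h \<in> hom C W P \<and> Cmp C p h = u \<and> Cmp C q h = v"
  unfolding is_pullback_def by (elim conjE) (drule bspec, assumption, drule spec, drule spec, drule mp, (intro conjI; assumption), assumption)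

lemma power_exists:
  assumes "finite E" "A \<in> Obj C"
  shows "\<exists>P (\<pi>::'i \<Rightarrow> _). is_power C A E P \<pi> \<and> points C A E P \<pi>"
  using assms(1)
proof (induction E rule: finite_induct)
  case empty
  have "is_power C A {} eps (\<lambda>_. undefined)"
    unfolding is_power_def using tm assms(2) eps_obj by simp
  moreover have "points C A {} eps (\<lambda>_. undefined)" unfolding points_def using uset_eps by auto
  ultimately show ?case by blast
next
  case (insert e E)
  then obtain P \<pi> where pw: "is_power C A E P \<pi>" and pt: "points C A E P \<pi>" by blast
  have PO: "P \<in> Obj C" using power_obj[OF pw] by (rule conjunct2)
  have \<pi>h: "\<And>i. i \<in> E \<Longrightarrow> \<pi> i \<in> hom C P A" by (rule power_comp[OF pw])
  obtain tA where tA: "tA \<in> hom C A eps" using term_ex[OF assms(2)] by blast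
  obtain tP where tP: "tP \<in> hom C P eps" using term_ex[OF PO] by blast
  have "tA \<in> Mor C" "tP \<in> Mor C" "Cod C tA = Cod C tP" using tA tP by (auto simp: hom_def)
  then obtain Q p q where pb: "is_pullback C tA tP Q p q" using fib1 by blast
  have domA: "Dom C tA = A" and domP: "Dom C tP = P" using tA tP by (auto simp: hom_def)
  have QO: "Q \<in> Obj C" and p: "p \<in> hom C Q A" and q: "q \<in> hom C Q P"
    using pullbackD1[OF pb] unfolding domA domP by auto
  have pbu: "\<And>W u v. W \<in> Obj C \<Longrightarrow> u \<in> hom C W A \<Longrightarrow> v \<in> hom C W P \<Longrightarrow> Cmp C tA u = Cmp C tP v \<Longrightarrow>
      \<exists>!h. h \<in> hom C W Q \<and> Cmp C p h = u \<and> Cmp C q h = v"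
    using pullbackD2[OF pb] unfolding domA domP by blast
  have bij0: "bij_betw (\<lambda>x. (UMap C p x, UMap C q x)) (USet C Q)
      {(x, y). x \<in> USet C (Dom C tA) \<and> y \<in> USet C (Dom C tP) \<and> UMap C tA x = UMap C tP y}"
    using fib2 pb by blast
  have bij: "bij_betw (\<lambda>x. (UMap C p x, UMap C q x)) (USet C Q)
      {(x, y). x \<in> USet C A \<and> y \<in> USet C P \<and> UMap C tA x = UMap C tP y}"
    using bij0 unfolding domA domP .
  define \<pi>' where "\<pi>' i = (if i = e then p else Cmp C (\<pi> i) q)" for i
  have \<pi>'h: "\<And>i. i \<in> insert e E \<Longrightarrow> \<pi>' i \<in> hom C Q A"
    using p q \<pi>h comp_hom unfolding \<pi>'_def by auto
  have "is_power C A (insert e E) Q \<pi>'"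
    unfolding is_power_def
  proof (intro conjI ballI allI impI)
    show "A \<in> Obj C" by fact
    show "Q \<in> Obj C" by fact
    show "\<And>i. i \<in> insert e E \<Longrightarrow> \<pi>' i \<in> hom C Q A" by (rule \<pi>'h)
    fix X h assume X: "X \<in> Obj C" and h: "\<forall>i\<in>insert e E. h i \<in> hom C X A"
    have hE: "\<And>i. i \<in> E \<Longrightarrow> h i \<in> hom C X A" using h by blast
    obtain u0 where u0: "u0 \<in> hom C X P" "\<forall>i\<in>E. Cmp C (\<pi> i) u0 = h i"
      using power_ex[where h=h, OF pw X hE] by blast
    have u0u: "\<And>w. w \<in> hom C X P \<Longrightarrow> \<forall>i\<in>E. Cmp C (\<pi> i) w = h i \<Longrightarrow> w = u0"
      using power_uniq[where h=h, OF pw X hE _ _ u0] by blast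
    have he: "h e \<in> hom C X A" using h by blast
    have "Cmp C tA (h e) = Cmp C tP u0"
      using term_uniq[OF comp_hom[OF he tA] comp_hom[OF u0(1) tP]] .
    then have ex1: "\<exists>!k. k \<in> hom C X Q \<and> Cmp C p k = h e \<and> Cmp C q k = u0"
      using pbu[OF X he u0(1)] by blast
    then obtain k where k: "k \<in> hom C X Q" "Cmp C p k = h e" "Cmp C q k = u0"
      by blast
    have ku: "\<And>w. w \<in> hom C X Q \<and> Cmp C p w = h e \<and> Cmp C q w = u0 \<Longrightarrow> w = k"
      using ex1 k by blast
    show "\<exists>!u. u \<in> hom C X Q \<and> (\<forall>i\<in>insert e E. Cmp C (\<pi>' i) u = h i)"
    proof (rule ex1I[of _ k], intro conjI ballI)
      show "k \<in> hom C X Q" by (rule k(1))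
      fix i assume i: "i \<in> insert e E"
      show "Cmp C (\<pi>' i) k = h i"
      proof (cases "i = e")
        case True then show ?thesis using k unfolding \<pi>'_def by simp
      next
        case False
        then have iE: "i \<in> E" using i by blast
        have "Cmp C (\<pi>' i) k = Cmp C (\<pi> i) (Cmp C q k)"
          using False assoc[OF k(1) q \<pi>h[OF iE]] unfolding \<pi>'_def by simp
        then show ?thesis using k u0 iE by simp
      qed
    next
      fix w assume w: "w \<in> hom C X Q \<and> (\<forall>i\<in>insert e E. Cmp C (\<pi>' i) w = h i)"
      have "Cmp C p w = h e" using w unfolding \<pi>'_def by auto
      moreover have "Cmp C q w = u0"
      proof (rule u0u)
        show "Cmp C q w \<in> hom C X P" using w q comp_hom by blast
        show "\<forall>i\<in>E. Cmp C (\<pi> i) (Cmp C q w) = h i"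
        proof
          fix i assume iE: "i \<in> E"
          have "i \<noteq> e" using iE insert.hyps by blast
          then have "Cmp C (\<pi>' i) w = Cmp C (\<pi> i) (Cmp C q w)"
            using assoc[of w X Q q P "\<pi> i" A] w q \<pi>h[OF iE] unfolding \<pi>'_def by simp
          then show "Cmp C (\<pi> i) (Cmp C q w) = h i" using w iE by simp
        qed
      qed
      ultimately show "w = k" using ku w by blast
    qed
  qed
  moreover have "points C A (insert e E) Q \<pi>'"
    unfolding points_def
  proof (intro allI impI)
    fix \<psi> assume \<psi>: "\<forall>i\<in>insert e E. \<psi> i \<in> USet C A"
    have \<psi>E: "\<And>i. i \<in> E \<Longrightarrow> \<psi> i \<in> USet C A" using \<psi> by blast
    obtain y where y: "y \<in> USet C P" "\<forall>i\<in>E. UMap C (\<pi> i) y = \<psi> i"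
      using points_ex[where \<psi>=\<psi>, OF pt \<psi>E] by blast
    have yu: "\<And>z. z \<in> USet C P \<Longrightarrow> (\<forall>i\<in>E. UMap C (\<pi> i) z = \<psi> i) \<Longrightarrow> z = y"
      using points_uniq[where \<psi>=\<psi>, OF pt \<psi>E _ _ y] by blast
    have "UMap C tA (\<psi> e) \<in> USet C eps" "UMap C tP y \<in> USet C eps"
      using umap_in[OF tA] umap_in[OF tP] \<psi> y by auto
    hence "(\<psi> e, y) \<in> {(x, y). x \<in> USet C A \<and> y \<in> USet C P \<and> UMap C tA x = UMap C tP y}"
      using uset_eps \<psi> y by auto
    hence "(\<psi> e, y) \<in> (\<lambda>x. (UMap C p x, UMap C q x)) ` USet C Q"
      using bij unfolding bij_betw_def by simp
    then obtain x where x0: "x \<in> USet C Q" "(\<psi> e, y) = (UMap C p x, UMap C q x)" by blast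
    hence x: "x \<in> USet C Q" "UMap C p x = \<psi> e" "UMap C q x = y" by auto
    show "\<exists>!x. x \<in> USet C Q \<and> (\<forall>i\<in>insert e E. UMap C (\<pi>' i) x = \<psi> i)"
    proof (rule ex1I[of _ x], intro conjI ballI)
      show "x \<in> USet C Q" by fact
      fix i assume i: "i \<in> insert e E"
      show "UMap C (\<pi>' i) x = \<psi> i"
      proof (cases "i = e")
        case True then show ?thesis using x unfolding \<pi>'_def by simp
      next
        case False
        then have iE: "i \<in> E" using i by blast
        then show ?thesis using False umap_comp[OF q \<pi>h[OF iE] x(1)] x y unfolding \<pi>'_def by simp
      qed
    next
      fix w assume w: "w \<in> USet C Q \<and> (\<forall>i\<in>insert e E. UMap C (\<pi>' i) w = \<psi> i)"
      have wp: "UMap C p w = \<psi> e" using w unfolding \<pi>'_def by auto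
      have "UMap C q w = y"
      proof (rule yu)
        show "UMap C q w \<in> USet C P" using umap_in q w by blast
        show "\<forall>i\<in>E. UMap C (\<pi> i) (UMap C q w) = \<psi> i"
        proof
          fix i assume iE: "i \<in> E"
          have "i \<noteq> e" using iE insert.hyps by blast
          then show "UMap C (\<pi> i) (UMap C q w) = \<psi> i"
            using umap_comp[OF q \<pi>h[OF iE]] w iE unfolding \<pi>'_def by fastforce
        qed
      qed
      then have "(\<lambda>x. (UMap C p x, UMap C q x)) w = (\<lambda>x. (UMap C p x, UMap C q x)) x"
        using wp x by simp
      moreover have "inj_on (\<lambda>x. (UMap C p x, UMap C q x)) (USet C Q)"
        using bij by (rule bij_betw_imp_inj_on)
      ultimately show "w = x" using x(1) w by (meson inj_onD)
    qed
  qed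
  ultimately show ?case by blast
qed

end


definition mu :: "('o, 'm, 'e) concrete_cat \<Rightarrow> 'm \<Rightarrow> 'o \<Rightarrow> ('i \<Rightarrow> 'm) \<Rightarrow> 'i set \<Rightarrow> ('i \<Rightarrow> 'e) \<Rightarrow> 'e" where
  "mu C f P \<pi> M \<psi> = UMap C f (THE x. x \<in> USet C P \<and> (\<forall>m\<in>M. UMap C (\<pi> m) x = \<psi> m))"

lemma mu_cong: "(\<And>m. m \<in> M \<Longrightarrow> \<psi> m = \<psi>' m) \<Longrightarrow> mu C f P \<pi> M \<psi> = mu C f P \<pi> M \<psi>'"
  unfolding mu_def by (metis (no_types, lifting))

context ccat begin

lemma the_pt: assumes pt: "points C A M P \<pi>" and \<psi>: "\<And>m. m \<in> M \<Longrightarrow> \<psi> m \<in> USet C A"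
  and x: "x \<in> USet C P" "\<forall>m\<in>M. UMap C (\<pi> m) x = \<psi> m"
  shows "(THE x. x \<in> USet C P \<and> (\<forall>m\<in>M. UMap C (\<pi> m) x = \<psi> m)) = x"
proof (rule the_equality)
  show "x \<in> USet C P \<and> (\<forall>m\<in>M. UMap C (\<pi> m) x = \<psi> m)" using x by (intro conjI)
  fix y assume y: "y \<in> USet C P \<and> (\<forall>m\<in>M. UMap C (\<pi> m) y = \<psi> m)"
  show "y = x" using points_uniq[where \<psi>=\<psi>, OF pt \<psi>] y x by blast
qed

lemma mu_in: assumes pt: "points C A M P \<pi>" and f: "f \<in> hom C P A"
  and \<psi>: "\<And>m. m \<in> M \<Longrightarrow> \<psi> m \<in> USet C A"
  shows "mu C f P \<pi> M \<psi> \<in> USet C A"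
proof -
  obtain x where x: "x \<in> USet C P" "\<forall>m\<in>M. UMap C (\<pi> m) x = \<psi> m"
    using points_ex[where \<psi>=\<psi>, OF pt \<psi>] by blast
  have "mu C f P \<pi> M \<psi> = UMap C f x" unfolding mu_def using the_pt[OF pt \<psi> x] by simp
  then show ?thesis using umap_in[OF f x(1)] by simp
qed

lemma power_reindex:
  assumes pw: "is_power C A E P \<pi>" and b: "bij_betw \<beta> E' E"
  shows "is_power C A E' P (\<pi> \<circ> \<beta>)"
  unfolding is_power_def
proof (intro conjI ballI allI impI)
  show "A \<in> Obj C" using power_obj[OF pw] by (rule conjunct1)
  show "P \<in> Obj C" using power_obj[OF pw] by (rule conjunct2)
  fix e' assume "e' \<in> E'"
  then have "\<beta> e' \<in> E" using bij_betwE[OF b] by blast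
  then show "(\<pi> \<circ> \<beta>) e' \<in> hom C P A" using power_comp[OF pw] by simp
next
  fix X h' assume X: "X \<in> Obj C" and h': "\<forall>e'\<in>E'. h' e' \<in> hom C X A"
  define h where "h e = h' (inv_into E' \<beta> e)" for e
  have inE': "\<And>e. e \<in> E \<Longrightarrow> inv_into E' \<beta> e \<in> E'"
    using b by (metis bij_betw_def inv_into_into)
  have hh: "\<And>e. e \<in> E \<Longrightarrow> h e \<in> hom C X A" unfolding h_def using inE' h' by blast
  have ex: "\<exists>!u. u \<in> hom C X P \<and> (\<forall>e\<in>E. Cmp C (\<pi> e) u = h e)"
    using power_univ[where h=h, OF pw X hh] .
  have eq: "(\<forall>e\<in>E. Cmp C (\<pi> e) u = h e) \<longleftrightarrow> (\<forall>e'\<in>E'. Cmp C ((\<pi> \<circ> \<beta>) e') u = h' e')" for u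
  proof
    assume L: "\<forall>e\<in>E. Cmp C (\<pi> e) u = h e"
    show "\<forall>e'\<in>E'. Cmp C ((\<pi> \<circ> \<beta>) e') u = h' e'"
    proof
      fix e' assume e': "e' \<in> E'"
      have be: "\<beta> e' \<in> E" using bij_betwE[OF b] e' by blast
      have "inv_into E' \<beta> (\<beta> e') = e'" using b e' by (metis bij_betw_def inv_into_f_f)
      then show "Cmp C ((\<pi> \<circ> \<beta>) e') u = h' e'" using L be unfolding h_def by simp
    qed
  next
    assume R: "\<forall>e'\<in>E'. Cmp C ((\<pi> \<circ> \<beta>) e') u = h' e'"
    show "\<forall>e\<in>E. Cmp C (\<pi> e) u = h e"
    proof
      fix e assume e: "e \<in> E"
      have "\<beta> (inv_into E' \<beta> e) = e" using b e by (metis bij_betw_def f_inv_into_f)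
      then show "Cmp C (\<pi> e) u = h e" using R inE'[OF e] unfolding h_def by (metis comp_apply)
    qed
  qed
  show "\<exists>!u. u \<in> hom C X P \<and> (\<forall>e'\<in>E'. Cmp C ((\<pi> \<circ> \<beta>) e') u = h' e')"
    using ex unfolding eq .
qed

lemma local_morph:
  assumes pM: "is_power C A M PM \<pi>M" and ptM: "points C A M PM \<pi>M" and f: "f \<in> hom C PM A"
    and pI: "is_power C A I PH \<pi>H" and s: "\<And>h m. h \<in> I \<Longrightarrow> m \<in> M \<Longrightarrow> s h m \<in> I"
  shows "\<exists>T. T \<in> hom C PH PH \<and> (\<forall>x\<in>USet C PH. \<forall>h\<in>I.
     UMap C (\<pi>H h) (UMap C T x) = mu C f PM \<pi>M M (\<lambda>m. UMap C (\<pi>H (s h m)) x))"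
proof -
  have PHO: "PH \<in> Obj C" using power_obj[OF pI] by (rule conjunct2)
  define r where "r h = (SOME r. r \<in> hom C PH PM \<and> (\<forall>m\<in>M. Cmp C (\<pi>M m) r = \<pi>H (s h m)))" for h
  have r: "r h \<in> hom C PH PM \<and> (\<forall>m\<in>M. Cmp C (\<pi>M m) (r h) = \<pi>H (s h m))" if h: "h \<in> I" for h
  proof -
    have c: "\<And>m. m \<in> M \<Longrightarrow> \<pi>H (s h m) \<in> hom C PH A" using power_comp[OF pI s[OF h]] .
    have "\<exists>r. r \<in> hom C PH PM \<and> (\<forall>m\<in>M. Cmp C (\<pi>M m) r = \<pi>H (s h m))"
      using power_ex[where h="\<lambda>m. \<pi>H (s h m)", OF pM PHO c] .
    then show ?thesis unfolding r_def by (rule someI_ex)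
  qed
  define k where "k h = Cmp C f (r h)" for h
  have kh: "\<And>h. h \<in> I \<Longrightarrow> k h \<in> hom C PH A" unfolding k_def using r comp_hom f by blast
  obtain T where T: "T \<in> hom C PH PH" "\<forall>h\<in>I. Cmp C (\<pi>H h) T = k h"
    using power_ex[where h=k, OF pI PHO kh] by blast
  show ?thesis
  proof (intro exI conjI ballI)
    show "T \<in> hom C PH PH" by (rule T(1))
    fix x h assume x: "x \<in> USet C PH" and h: "h \<in> I"
    have rh: "r h \<in> hom C PH PM" using r[OF h] by (rule conjunct1)
    have "UMap C (\<pi>H h) (UMap C T x) = UMap C (Cmp C (\<pi>H h) T) x"
      using umap_comp[OF T(1) power_comp[OF pI h] x] by simp
    also have "\<dots> = UMap C (k h) x" using T(2) h by simp
    also have "\<dots> = UMap C f (UMap C (r h) x)" unfolding k_def using umap_comp[OF rh f x] .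
    also have "\<dots> = mu C f PM \<pi>M M (\<lambda>m. UMap C (\<pi>H (s h m)) x)"
    proof -
      have \<psi>: "\<And>m. m \<in> M \<Longrightarrow> UMap C (\<pi>H (s h m)) x \<in> USet C A"
        using umap_in[OF power_comp[OF pI s[OF h]] x] .
      have "UMap C (r h) x \<in> USet C PM" using umap_in[OF rh x] .
      moreover have "\<forall>m\<in>M. UMap C (\<pi>M m) (UMap C (r h) x) = UMap C (\<pi>H (s h m)) x"
      proof
        fix m assume m: "m \<in> M"
        have "UMap C (\<pi>M m) (UMap C (r h) x) = UMap C (Cmp C (\<pi>M m) (r h)) x"
          using umap_comp[OF rh power_comp[OF pM m] x] by simp
        then show "UMap C (\<pi>M m) (UMap C (r h) x) = UMap C (\<pi>H (s h m)) x"
          using r[OF h] m by simp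
      qed
      ultimately show ?thesis unfolding mu_def using the_pt[OF ptM \<psi>] by simp
    qed
    finally show "UMap C (\<pi>H h) (UMap C T x) = mu C f PM \<pi>M M (\<lambda>m. UMap C (\<pi>H (s h m)) x)" .
  qed
qed

end


context ccat_term begin

lemma CA_data:
  assumes "\<tau> \<in> CA C A a" "A \<in> Obj C"
  shows "\<exists>M P \<pi> f. finite M \<and> is_power C A M P \<pi> \<and> points C A M P \<pi> \<and> f \<in> hom C P A
     \<and> (\<forall>c \<in> configs C A. \<forall>g. \<tau> c g = mu C f P \<pi> M (\<lambda>m. c (g + m)))"
proof -
  obtain M P \<pi> f where M: "finite M" and pw: "is_power C A M P \<pi>" and f: "f \<in> hom C P A"
    and eq: "\<forall>c \<in> configs C A. \<forall>g. \<tau> c g =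
           UMap C f (THE x. x \<in> USet C P \<and> (\<forall>m\<in>M. UMap C (\<pi> m) x = c (g + m)))"
    using assms(1) unfolding CA_def by blast
  obtain P' \<pi>' where "is_power C A M P' \<pi>'" "points C A M P' \<pi>'"
    using power_exists[OF M assms(2)] by blast
  then have pt: "points C A M P \<pi>" using power_points_transfer pw by blast
  show ?thesis
    apply (rule exI[of _ M], rule exI[of _ P], rule exI[of _ \<pi>], rule exI[of _ f])
    using M pw pt f eq unfolding mu_def by blast
qed

lemma main:
  fixes \<tau> \<sigma> :: "('g::group_add \<Rightarrow> 'e) \<Rightarrow> ('g \<Rightarrow> 'e)"
  assumes lef: "LEF TYPE('g)" and AO: "A \<in> Obj C"
    and hop: "fin_prod_hopfian C A \<or> fin_prod_cohopfian C A"
    and \<tau>CA: "\<tau> \<in> CA C A a" and \<sigma>CA: "\<sigma> \<in> CA C A a"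
    and inv: "\<forall>c \<in> configs C A. \<sigma> (\<tau> c) = c"
  shows "\<forall>c \<in> configs C A. \<tau> (\<sigma> c) = c"
proof -
  obtain Mt Pt \<pi>t ft where Mt: "finite Mt" and pwt: "is_power C A Mt Pt \<pi>t" and ptt: "points C A Mt Pt \<pi>t"
    and ft: "ft \<in> hom C Pt A" and teq: "\<forall>c \<in> configs C A. \<forall>g. \<tau> c g = mu C ft Pt \<pi>t Mt (\<lambda>m. c (g + m))"
    using CA_data[OF \<tau>CA AO] by blast
  obtain Ms Ps \<pi>s fs where Ms: "finite Ms" and pws: "is_power C A Ms Ps \<pi>s" and pts: "points C A Ms Ps \<pi>s"
    and fs: "fs \<in> hom C Ps A" and seq: "\<forall>c \<in> configs C A. \<forall>g. \<sigma> c g = mu C fs Ps \<pi>s Ms (\<lambda>m. c (g + m))"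
    using CA_data[OF \<sigma>CA AO] by blast
  have tconf: "\<tau> c \<in> configs C A" if "c \<in> configs C A" for c
    unfolding configs_def
  proof (intro CollectI allI)
    fix g
    have "\<And>m. m \<in> Mt \<Longrightarrow> c (g + m) \<in> USet C A" using that unfolding configs_def by blast
    then have "mu C ft Pt \<pi>t Mt (\<lambda>m. c (g + m)) \<in> USet C A" using mu_in[where \<psi>="\<lambda>m. c (g + m)", OF ptt ft] by blast
    then show "\<tau> c g \<in> USet C A" using teq that by simp
  qed
  have sconf: "\<sigma> c \<in> configs C A" if "c \<in> configs C A" for c
    unfolding configs_def
  proof (intro CollectI allI)
    fix g
    have "\<And>m. m \<in> Ms \<Longrightarrow> c (g + m) \<in> USet C A" using that unfolding configs_def by blast
    then have "mu C fs Ps \<pi>s Ms (\<lambda>m. c (g + m)) \<in> USet C A" using mu_in[where \<psi>="\<lambda>m. c (g + m)", OF pts fs] by blast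
    then show "\<sigma> c g \<in> USet C A" using seq that by simp
  qed
  define S where "S = insert 0 (Mt \<union> Ms \<union> (\<lambda>(x, y). x + y) ` (Mt \<times> Ms) \<union> (\<lambda>(x, y). x + y) ` (Ms \<times> Mt))"
  have Sfin: "finite S" unfolding S_def using Mt Ms by simp
  have S0: "0 \<in> S" and SMt: "\<And>m. m \<in> Mt \<Longrightarrow> m \<in> S" and SMs: "\<And>m. m \<in> Ms \<Longrightarrow> m \<in> S"
    and Sts: "\<And>m m'. m \<in> Mt \<Longrightarrow> m' \<in> Ms \<Longrightarrow> m + m' \<in> S"
    and Sst: "\<And>m m'. m \<in> Mt \<Longrightarrow> m' \<in> Ms \<Longrightarrow> m' + m \<in> S"
    unfolding S_def by force+
  obtain H :: "nat monoid" and \<phi> where grp: "group H" and Hfin: "finite (carrier H)"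
    and \<phi>S: "\<phi> \<in> S \<rightarrow> carrier H" and \<phi>inj: "inj_on \<phi> S"
    and \<phi>hom: "\<forall>a\<in>S. \<forall>b\<in>S. a + b \<in> S \<longrightarrow> \<phi> (a + b) = \<phi> a \<otimes>\<^bsub>H\<^esub> \<phi> b"
    using lef Sfin unfolding LEF_def by blast
  interpret H: group H by (rule grp)
  define I where "I = carrier H"
  have \<phi>I: "\<And>s. s \<in> S \<Longrightarrow> \<phi> s \<in> I" using \<phi>S unfolding I_def by blast
  have \<phi>0: "\<phi> 0 = \<one>\<^bsub>H\<^esub>"
  proof -
    have "\<phi> (0 + 0) = \<phi> 0 \<otimes>\<^bsub>H\<^esub> \<phi> 0" using \<phi>hom S0 by (metis add_0)
    then have "\<phi> 0 \<otimes>\<^bsub>H\<^esub> \<phi> 0 = \<phi> 0" by simp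
    then show ?thesis using H.l_cancel_one \<phi>I[OF S0] unfolding I_def by blast
  qed
  have \<phi>ts: "\<And>m m'. m \<in> Mt \<Longrightarrow> m' \<in> Ms \<Longrightarrow> \<phi> (m + m') = \<phi> m \<otimes>\<^bsub>H\<^esub> \<phi> m'"
    using \<phi>hom SMt SMs Sts by blast
  have \<phi>st: "\<And>m m'. m \<in> Mt \<Longrightarrow> m' \<in> Ms \<Longrightarrow> \<phi> (m' + m) = \<phi> m' \<otimes>\<^bsub>H\<^esub> \<phi> m"
    using \<phi>hom SMt SMs Sst by blast
  obtain PH \<pi>H where pwH: "is_power C A I PH \<pi>H" and ptH: "points C A I PH \<pi>H"
    using power_exists[OF Hfin[folded I_def] AO] by blast
  have PHO: "PH \<in> Obj C" using power_obj[OF pwH] by (rule conjunct2)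
  have st: "\<And>h m. h \<in> I \<Longrightarrow> m \<in> Mt \<Longrightarrow> h \<otimes>\<^bsub>H\<^esub> \<phi> m \<in> I"
    using \<phi>I SMt unfolding I_def by blast
  have ss: "\<And>h m. h \<in> I \<Longrightarrow> m \<in> Ms \<Longrightarrow> h \<otimes>\<^bsub>H\<^esub> \<phi> m \<in> I"
    using \<phi>I SMs unfolding I_def by blast
  obtain T where T: "T \<in> hom C PH PH" and Tx: "\<forall>x\<in>USet C PH. \<forall>h\<in>I.
     UMap C (\<pi>H h) (UMap C T x) = mu C ft Pt \<pi>t Mt (\<lambda>m. UMap C (\<pi>H (h \<otimes>\<^bsub>H\<^esub> \<phi> m)) x)"
    using local_morph[where s="\<lambda>h m. h \<otimes>\<^bsub>H\<^esub> \<phi> m", OF pwt ptt ft pwH st] by blast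
  obtain \<Sigma> where \<Sigma>: "\<Sigma> \<in> hom C PH PH" and \<Sigma>x: "\<forall>x\<in>USet C PH. \<forall>h\<in>I.
     UMap C (\<pi>H h) (UMap C \<Sigma> x) = mu C fs Ps \<pi>s Ms (\<lambda>m. UMap C (\<pi>H (h \<otimes>\<^bsub>H\<^esub> \<phi> m)) x)"
    using local_morph[where s="\<lambda>h m. h \<otimes>\<^bsub>H\<^esub> \<phi> m", OF pws pts fs pwH ss] by blast
  have idH: "Idm C PH \<in> hom C PH PH" using id_hom[OF PHO] .
  have \<pi>HU: "\<And>k x. k \<in> I \<Longrightarrow> x \<in> USet C PH \<Longrightarrow> UMap C (\<pi>H k) x \<in> USet C A"
    using umap_in power_comp[OF pwH] by blast

  have ST: "Cmp C \<Sigma> T = Idm C PH"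
  proof (rule faithful[OF comp_hom[OF T \<Sigma>] idH])
    fix x assume x: "x \<in> USet C PH"
    define \<psi> where "\<psi> k = UMap C (\<pi>H k) x" for k
    have \<psi>E: "\<And>k. k \<in> I \<Longrightarrow> \<psi> k \<in> USet C A" unfolding \<psi>_def using \<pi>HU x by blast
    have Tx': "UMap C T x \<in> USet C PH" using umap_in[OF T x] .
    have z: "UMap C \<Sigma> (UMap C T x) \<in> USet C PH" using umap_in[OF \<Sigma> Tx'] .
    have "UMap C \<Sigma> (UMap C T x) = x"
    proof (rule points_uniq[where \<psi>=\<psi>, OF ptH \<psi>E z _ x])
      show "\<forall>i\<in>I. UMap C (\<pi>H i) x = \<psi> i" unfolding \<psi>_def by blast
      show "\<forall>h\<in>I. UMap C (\<pi>H h) (UMap C \<Sigma> (UMap C T x)) = \<psi> h"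
      proof
        fix h assume h: "h \<in> I"
        define c where "c g = (if g \<in> S then \<psi> (h \<otimes>\<^bsub>H\<^esub> \<phi> g) else \<psi> h)" for g
        have hc: "h \<in> carrier H" using h unfolding I_def .
        have c: "c \<in> configs C A" unfolding configs_def c_def
          using \<psi>E h \<phi>I unfolding I_def by auto
        have c0: "c 0 = \<psi> h" unfolding c_def using S0 \<phi>0 hc by simp
        have "UMap C (\<pi>H h) (UMap C \<Sigma> (UMap C T x))
            = mu C fs Ps \<pi>s Ms (\<lambda>m'. UMap C (\<pi>H (h \<otimes>\<^bsub>H\<^esub> \<phi> m')) (UMap C T x))"
          using \<Sigma>x Tx' h by blast
        also have "\<dots> = mu C fs Ps \<pi>s Ms (\<lambda>m'. mu C ft Pt \<pi>t Mt (\<lambda>m. c (m' + m)))"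
        proof (rule mu_cong)
          fix m' assume m': "m' \<in> Ms"
          have hm': "h \<otimes>\<^bsub>H\<^esub> \<phi> m' \<in> I" using ss[OF h m'] .
          have "UMap C (\<pi>H (h \<otimes>\<^bsub>H\<^esub> \<phi> m')) (UMap C T x)
              = mu C ft Pt \<pi>t Mt (\<lambda>m. UMap C (\<pi>H ((h \<otimes>\<^bsub>H\<^esub> \<phi> m') \<otimes>\<^bsub>H\<^esub> \<phi> m)) x)"
            using Tx x hm' by blast
          also have "\<dots> = mu C ft Pt \<pi>t Mt (\<lambda>m. c (m' + m))"
          proof (rule mu_cong)
            fix m assume m: "m \<in> Mt"
            have "c (m' + m) = \<psi> (h \<otimes>\<^bsub>H\<^esub> (\<phi> m' \<otimes>\<^bsub>H\<^esub> \<phi> m))"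
              unfolding c_def using Sst[OF m m'] \<phi>st[OF m m'] by simp
            also have "\<dots> = \<psi> ((h \<otimes>\<^bsub>H\<^esub> \<phi> m') \<otimes>\<^bsub>H\<^esub> \<phi> m)"
              using H.m_assoc hc \<phi>I[OF SMs[OF m']] \<phi>I[OF SMt[OF m]] unfolding I_def by simp
            finally show "UMap C (\<pi>H ((h \<otimes>\<^bsub>H\<^esub> \<phi> m') \<otimes>\<^bsub>H\<^esub> \<phi> m)) x = c (m' + m)"
              unfolding \<psi>_def by simp
          qed
          finally show "UMap C (\<pi>H (h \<otimes>\<^bsub>H\<^esub> \<phi> m')) (UMap C T x) = mu C ft Pt \<pi>t Mt (\<lambda>m. c (m' + m))" .
        qed
        also have "\<dots> = \<sigma> (\<tau> c) 0"
        proof -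
          have "\<sigma> (\<tau> c) 0 = mu C fs Ps \<pi>s Ms (\<lambda>m'. \<tau> c (0 + m'))" using seq tconf[OF c] by blast
          also have "\<dots> = mu C fs Ps \<pi>s Ms (\<lambda>m'. mu C ft Pt \<pi>t Mt (\<lambda>m. c (m' + m)))"
            using teq c by simp
          finally show ?thesis by simp
        qed
        also have "\<dots> = c 0" using inv c by simp
        finally show "UMap C (\<pi>H h) (UMap C \<Sigma> (UMap C T x)) = \<psi> h" using c0 by simp
      qed
    qed
    then show "UMap C (Cmp C \<Sigma> T) x = UMap C (Idm C PH) x"
      using umap_comp[OF T \<Sigma> x] umap_id[OF PHO x] by simp
  qed

  have TS: "Cmp C T \<Sigma> = Idm C PH"
  proof -
    obtain \<beta> where \<beta>: "bij_betw \<beta> {0..<card I} I" using ex_bij_betw_nat_finite[OF Hfin[folded I_def]] by blast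
    have pwn: "is_power C A {..<card I} PH (\<pi>H \<circ> \<beta>)"
      using power_reindex[OF pwH] \<beta> by (simp add: atLeast0LessThan)
    have ToT: "Dom C T = PH" "Cod C T = PH" "T \<in> Mor C" using homD[OF T] by simp_all
    have SoS: "Dom C \<Sigma> = PH" "Cod C \<Sigma> = PH" "\<Sigma> \<in> Mor C" using homD[OF \<Sigma>] by simp_all
    from hop show ?thesis
    proof
      assume "fin_prod_hopfian C A"
      then have "hopfian C PH" unfolding fin_prod_hopfian_def using pwn by blast
      moreover have "epi C \<Sigma>"
        unfolding epi_def
      proof (intro conjI ballI allI impI)
        show "\<Sigma> \<in> Mor C" by (rule SoS(3))
        fix Z g h assume gh: "g \<in> hom C (Cod C \<Sigma>) Z \<and> h \<in> hom C (Cod C \<Sigma>) Z \<and> Cmp C g \<Sigma> = Cmp C h \<Sigma>"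
        have g: "g \<in> hom C PH Z" and h: "h \<in> hom C PH Z" using gh SoS by auto
        have "g = Cmp C g (Cmp C \<Sigma> T)" using ST idr[OF g] by simp
        also have "\<dots> = Cmp C (Cmp C g \<Sigma>) T" using assoc[OF T \<Sigma> g] .
        also have "\<dots> = Cmp C (Cmp C h \<Sigma>) T" using gh by simp
        also have "\<dots> = Cmp C h (Cmp C \<Sigma> T)" using assoc[OF T \<Sigma> h] by simp
        also have "\<dots> = h" using ST idr[OF h] by simp
        finally show "g = h" .
      qed
      ultimately have "iso C \<Sigma>" unfolding hopfian_def using \<Sigma> by blast
      then obtain \<Sigma>' where \<Sigma>': "\<Sigma>' \<in> hom C PH PH" "Cmp C \<Sigma>' \<Sigma> = Idm C PH" "Cmp C \<Sigma> \<Sigma>' = Idm C PH"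
        unfolding iso_def using SoS by auto
      have "T = Cmp C (Idm C PH) T" using idl[OF T] by simp
      also have "\<dots> = Cmp C (Cmp C \<Sigma>' \<Sigma>) T" using \<Sigma>' by simp
      also have "\<dots> = Cmp C \<Sigma>' (Cmp C \<Sigma> T)" using assoc[OF T \<Sigma> \<Sigma>'(1)] by simp
      also have "\<dots> = \<Sigma>'" using ST idr[OF \<Sigma>'(1)] by simp
      finally show ?thesis using \<Sigma>' by simp
    next
      assume "fin_prod_cohopfian C A"
      then have "cohopfian C PH" unfolding fin_prod_cohopfian_def using pwn by blast
      moreover have "mono C T"
        unfolding mono_def
      proof (intro conjI ballI allI impI)
        show "T \<in> Mor C" by (rule ToT(3))
        fix Z g h assume gh: "g \<in> hom C Z (Dom C T) \<and> h \<in> hom C Z (Dom C T) \<and> Cmp C T g = Cmp C T h"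
        have g: "g \<in> hom C Z PH" and h: "h \<in> hom C Z PH" using gh ToT by auto
        have "g = Cmp C (Cmp C \<Sigma> T) g" using ST idl[OF g] by simp
        also have "\<dots> = Cmp C \<Sigma> (Cmp C T g)" using assoc[OF g T \<Sigma>] by simp
        also have "\<dots> = Cmp C \<Sigma> (Cmp C T h)" using gh by simp
        also have "\<dots> = Cmp C (Cmp C \<Sigma> T) h" using assoc[OF h T \<Sigma>] .
        also have "\<dots> = h" using ST idl[OF h] by simp
        finally show "g = h" .
      qed
      ultimately have "iso C T" unfolding cohopfian_def using T by blast
      then obtain T' where T': "T' \<in> hom C PH PH" "Cmp C T' T = Idm C PH" "Cmp C T T' = Idm C PH"
        unfolding iso_def using ToT by auto
      have "\<Sigma> = Cmp C \<Sigma> (Idm C PH)" using idr[OF \<Sigma>] by simp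
      also have "\<dots> = Cmp C \<Sigma> (Cmp C T T')" using T' by simp
      also have "\<dots> = Cmp C (Cmp C \<Sigma> T) T'" using assoc[OF T'(1) T \<Sigma>] .
      also have "\<dots> = T'" using ST idl[OF T'(1)] by simp
      finally show ?thesis using T' by simp
    qed
  qed

  show ?thesis
  proof
    fix c :: "'g \<Rightarrow> 'e" assume c: "c \<in> configs C A"
    show "\<tau> (\<sigma> c) = c"
    proof
      fix g
      define \<psi> where "\<psi> k = (if k \<in> \<phi> ` S then c (g + inv_into S \<phi> k) else c g)" for k
      have \<psi>\<phi>: "\<And>s. s \<in> S \<Longrightarrow> \<psi> (\<phi> s) = c (g + s)"
        unfolding \<psi>_def using \<phi>inj by (simp add: inv_into_f_f)
      have \<psi>E: "\<And>k. k \<in> I \<Longrightarrow> \<psi> k \<in> USet C A" unfolding \<psi>_def using c unfolding configs_def by simp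
      obtain x where x: "x \<in> USet C PH" "\<forall>k\<in>I. UMap C (\<pi>H k) x = \<psi> k"
        using points_ex[where \<psi>=\<psi>, OF ptH \<psi>E] by blast
      have one: "\<one>\<^bsub>H\<^esub> \<in> I" unfolding I_def by simp
      have Sx: "UMap C \<Sigma> x \<in> USet C PH" using umap_in[OF \<Sigma> x(1)] .
      have "c g = UMap C (\<pi>H \<one>\<^bsub>H\<^esub>) x" using x(2) one \<psi>\<phi>[OF S0] \<phi>0 by simp
      also have "\<dots> = UMap C (\<pi>H \<one>\<^bsub>H\<^esub>) (UMap C (Cmp C T \<Sigma>) x)"
        using TS umap_id[OF PHO x(1)] by simp
      also have "\<dots> = UMap C (\<pi>H \<one>\<^bsub>H\<^esub>) (UMap C T (UMap C \<Sigma> x))"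
        using umap_comp[OF \<Sigma> T x(1)] by simp
      also have "\<dots> = mu C ft Pt \<pi>t Mt (\<lambda>m. UMap C (\<pi>H (\<one>\<^bsub>H\<^esub> \<otimes>\<^bsub>H\<^esub> \<phi> m)) (UMap C \<Sigma> x))"
        using Tx Sx one by blast
      also have "\<dots> = mu C ft Pt \<pi>t Mt (\<lambda>m. \<sigma> c (g + m))"
      proof (rule mu_cong)
        fix m assume m: "m \<in> Mt"
        have \<phi>m: "\<phi> m \<in> carrier H" using \<phi>I[OF SMt[OF m]] unfolding I_def .
        have m1: "\<one>\<^bsub>H\<^esub> \<otimes>\<^bsub>H\<^esub> \<phi> m \<in> I" using st[OF one m] .
        have "UMap C (\<pi>H (\<one>\<^bsub>H\<^esub> \<otimes>\<^bsub>H\<^esub> \<phi> m)) (UMap C \<Sigma> x)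
           = mu C fs Ps \<pi>s Ms (\<lambda>m'. UMap C (\<pi>H ((\<one>\<^bsub>H\<^esub> \<otimes>\<^bsub>H\<^esub> \<phi> m) \<otimes>\<^bsub>H\<^esub> \<phi> m')) x)"
          using \<Sigma>x x(1) m1 by blast
        also have "\<dots> = mu C fs Ps \<pi>s Ms (\<lambda>m'. c (g + m + m'))"
        proof (rule mu_cong)
          fix m' assume m': "m' \<in> Ms"
          have "(\<one>\<^bsub>H\<^esub> \<otimes>\<^bsub>H\<^esub> \<phi> m) \<otimes>\<^bsub>H\<^esub> \<phi> m' = \<phi> (m + m')"
            using \<phi>m \<phi>ts[OF m m'] by simp
          moreover have "\<phi> (m + m') \<in> I" using \<phi>I[OF Sts[OF m m']] .
          ultimately show "UMap C (\<pi>H ((\<one>\<^bsub>H\<^esub> \<otimes>\<^bsub>H\<^esub> \<phi> m) \<otimes>\<^bsub>H\<^esub> \<phi> m')) x = c (g + m + m')"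
            using x(2) \<psi>\<phi>[OF Sts[OF m m']] by (simp add: add.assoc)
        qed
        also have "\<dots> = \<sigma> c (g + m)" using seq c by simp
        finally show "UMap C (\<pi>H (\<one>\<^bsub>H\<^esub> \<otimes>\<^bsub>H\<^esub> \<phi> m)) (UMap C \<Sigma> x) = \<sigma> c (g + m)" .
      qed
      also have "\<dots> = \<tau> (\<sigma> c) g" using teq sconf[OF c] by simp
      finally show "\<tau> (\<sigma> c) g = c g" by simp
    qed
  qed
qed

end

theorem theorem6p1:
  fixes C :: "('o, 'm, 'e) concrete_cat"
    and A eps :: 'o and a :: 'm
    and \<tau> \<sigma> :: "('g::group_add \<Rightarrow> 'e) \<Rightarrow> ('g \<Rightarrow> 'e)"
  assumes "LEF TYPE('g)"
    and "concrete_category C"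
    and "has_terminal_object C"
    and "has_fibered_products C"
    and "is_terminal C eps"
    and "A \<in> Obj C"
    and "a \<in> hom C eps A"
    and "fin_prod_hopfian C A \<or> fin_prod_cohopfian C A"
    and "\<tau> \<in> CA C A a" and "\<sigma> \<in> CA C A a"
    and "\<forall>c \<in> configs C A. \<sigma> (\<tau> c) = c"
  shows "\<forall>c \<in> configs C A. \<tau> (\<sigma> c) = c"
proof -
  obtain t where t: "USet C eps = {t}" using assms(3,5) unfolding has_terminal_object_def by blast
  interpret ccat_term C eps t
    by unfold_locales (use assms(2,4,5) t in auto)
  show ?thesis by (rule main[OF assms(1,6,8,9,10,11)])
qed

end
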